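(* Let $(\sigma_n)_{n\ge1}$ be complex numbers with $\liminf_{n\to\infty}(\operatorname{Re}\sigma_{n+1}-\operatorname{Re}\sigma_n)=\gamma>0$ and $(\operatorname{Im}\sigma_n)$ bounded. Then for every $\varepsilon\in(0,1)$ and every $T>\frac{\pi}{\gamma\sqrt{1-\varepsilon}}$ there exist a constant $c(T)>0$ (depending on $T$, $\varepsilon$ and $(\sigma_n)$) and $n_0=n_0(\varepsilon)\in\mathbb{N}$, both independent of $(F_n)$, with $n_0$ independent of $T$, such that for every complex sequence $(F_n)$ with $\sum|F_n|^2<\infty$, $$\int_{-\infty}^{\infty}k^*(t)\Big|\sum_{n=n_0}^\infty F_ne^{i\sigma_nt}+\overline{F_n}e^{-i\overline{\sigma_n}t}\Big|^2dt\le c(T)\sum_{n=n_0}^\infty|F_n|^2 .$$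
   Context: For $T>0$, $k^*(t):=\cos\big(\frac{\pi t}{2T}\big)$ for $|t|\le T$ and $k^*(t):=0$ for $|t|>T$. *)

theory Defs
  imports "HOL-Analysis.Analysis"
begin

definition kstar :: "real \<Rightarrow> real \<Rightarrow> real" where
  "kstar T t = (if \<bar>t\<bar> \<le> T then cos (pi * t / (2 * T)) else 0)"

end

theory Submission
  imports Defs
begin


definition Ecos :: "real \<Rightarrow> complex \<Rightarrow> real \<Rightarrow> complex" where
  "Ecos a w t = of_real (cos (a*t)) * exp (\<i> * w * of_real t)"

lemma Ecos_cont: "continuous_on A (Ecos a w)"
  unfolding Ecos_def by (intro continuous_intros)

lemma Ecos_norm: "norm (Ecos a w t) \<le> exp (\<bar>Im w\<bar> * \<bar>t\<bar>)"
proof -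
  have "norm (Ecos a w t) = \<bar>cos (a*t)\<bar> * exp (- Im w * t)"
    unfolding Ecos_def by (simp add: norm_mult)
  also have "\<dots> \<le> 1 * exp (\<bar>Im w\<bar> * \<bar>t\<bar>)"
    by (intro mult_mono) (auto simp: abs_mult[symmetric] abs_le_iff)
  finally show ?thesis by simp
qed

lemma V_bound1:
  assumes "T > 0"
  shows "norm (integral {-T..T} (Ecos a w)) \<le> exp (\<bar>Im w\<bar> * T) * (2*T)"
proof -
  have "(Ecos a w has_integral integral {-T..T} (Ecos a w)) {-T..T}"
    by (intro integrable_integral integrable_continuous_interval Ecos_cont)
  moreover have "norm (Ecos a w t) \<le> exp (\<bar>Im w\<bar> * T)" if "t \<in> {-T..T}" for t
    using Ecos_norm[of a w t] that
    by (smt (verit) atLeastAtMost_iff exp_le_cancel_iff mult_left_mono abs_ge_zero)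
  ultimately have "norm (integral {-T..T} (Ecos a w)) \<le> exp (\<bar>Im w\<bar> * T) * Henstock_Kurzweil_Integration.content {-T..T}"
    by (intro has_integral_bound_real[where S="{}"]) auto
  then show ?thesis using assms by simp
qed

lemma V_eq:
  assumes "a * T = pi/2" "T > 0" and nz: "(of_real a)^2 - w^2 \<noteq> 0"
  shows "integral {-T..T} (Ecos a w) = 2 * of_real a * cos (w * of_real T) / ((of_real a)^2 - w^2)"
proof -
  define K where "K = inverse ((of_real a)^2 - w^2)"
  define G where "G z = K * (exp (\<i> * w * z) * (\<i> * w * cos (of_real a * z) + of_real a * sin (of_real a * z)))" for z
  have d: "(G has_field_derivative exp (\<i> * w * z) * cos (of_real a * z)) (at z)" for z
  proof -
    have "(G has_field_derivative K * (exp (\<i> * w * z) * (\<i> * w) * (\<i> * w * cos (of_real a * z) + of_real a * sin (of_real a * z))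
        + exp (\<i> * w * z) * (\<i> * w * (- sin (of_real a * z) * of_real a) + of_real a * (cos (of_real a * z) * of_real a)))) (at z)"
      unfolding G_def by (rule derivative_eq_intros refl | simp)+
    moreover have "K * (exp (\<i> * w * z) * (\<i> * w) * (\<i> * w * cos (of_real a * z) + of_real a * sin (of_real a * z))
        + exp (\<i> * w * z) * (\<i> * w * (- sin (of_real a * z) * of_real a) + of_real a * (cos (of_real a * z) * of_real a)))
       = K * (((of_real a)^2 - w^2) * (exp (\<i> * w * z) * cos (of_real a * z)))"
      by (simp add: algebra_simps power2_eq_square)
    moreover have "K * ((of_real a)^2 - w^2) = 1" using nz unfolding K_def by simp
    ultimately show ?thesis by (metis (no_types) mult.assoc mult_1)
  qed
  have "((\<lambda>t. G (of_real t)) has_vector_derivative Ecos a w t) (at t within {-T..T})" for t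
    using has_vector_derivative_real_field[OF d[of "of_real t"]]
    by (simp add: Ecos_def cos_of_real[symmetric] mult.commute)
  then have "(Ecos a w has_integral (G (of_real T) - G (of_real (-T)))) {-T..T}"
    using assms by (intro fundamental_theorem_of_calculus) auto
  then have "integral {-T..T} (Ecos a w) = G (of_real T) - G (of_real (-T))"
    by (rule integral_unique)
  also have "\<dots> = 2 * of_real a * cos (w * of_real T) / ((of_real a)^2 - w^2)"
  proof -
    have c: "cos (of_real a * of_real T) = (0::complex)" "sin (of_real a * of_real T) = (1::complex)"
      using assms(1) by (metis cos_of_real of_real_mult cos_pi_half of_real_0, metis sin_of_real of_real_mult sin_pi_half of_real_1)
    have "cos (w * of_real T) = (exp (\<i> * w * of_real T) + exp (- (\<i> * w * of_real T)))/2"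
      by (simp add: cos_exp_eq algebra_simps)
    moreover have "G (of_real T) = K * of_real a * exp (\<i> * w * of_real T)"
      unfolding G_def using c by simp
    moreover have "G (of_real (-T)) = - K * of_real a * exp (- (\<i> * w * of_real T))"
      unfolding G_def using c by simp
    ultimately show ?thesis unfolding K_def using nz
      by (simp add: field_simps)
  qed
  finally show ?thesis .
qed

lemma norm_cos_le: "norm (cos z) \<le> exp \<bar>Im z\<bar>"
proof -
  have "cos z = (exp (\<i> * z) + exp (- (\<i> * z))) / 2" by (simp add: cos_exp_eq)
  then have "norm (cos z) = norm (exp (\<i> * z) + exp (- (\<i> * z))) / 2"
    by (metis norm_divide norm_numeral)
  also have "\<dots> \<le> (norm (exp (\<i> * z)) + norm (exp (- (\<i> * z)))) / 2"
    by (intro divide_right_mono norm_triangle_ineq) auto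
  also have "\<dots> = (exp (- Im z) + exp (Im z)) / 2" by simp
  also have "\<dots> \<le> exp \<bar>Im z\<bar>" by (cases "Im z \<ge> 0") auto
  finally show ?thesis .
qed

definition Kc :: "real \<Rightarrow> real \<Rightarrow> real \<Rightarrow> real" where
  "Kc a T \<beta> = exp (\<beta> * T) * (8*a + 2*T*(1 + max (2*a^2) 1))"

lemma V_bound:
  assumes a: "a > 0" and T: "T > 0" and aT: "a * T = pi/2" and b: "\<bar>Im w\<bar> \<le> \<beta>"
  shows "norm (integral {-T..T} (Ecos a w)) \<le> Kc a T \<beta> / (1 + (Re w)^2)"
proof -
  define R where "R = max (2*a^2) 1"
  define E where "E = exp (\<beta> * T)"
  have E0: "E > 0" unfolding E_def by simp
  have Eb: "exp (\<bar>Im w\<bar> * T) \<le> E" unfolding E_def using b T by (simp add: mult_right_mono)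
  have p: "1 + (Re w)^2 > 0" by (simp add: add_pos_nonneg)
  show ?thesis
  proof (cases "(Re w)^2 \<ge> R")
    case True
    have R1: "(Re w)^2 \<ge> 1" "(Re w)^2 \<ge> 2*a^2" using True unfolding R_def by auto
    have "\<bar>Re w\<bar> \<le> cmod w" by (rule abs_Re_le_cmod)
    then have "(Re w)^2 \<le> (cmod w)^2" by (metis abs_ge_zero power2_abs power_mono)
    have "cmod ((of_real a)^2 - w^2) \<ge> cmod (w^2) - cmod ((of_real a)^2)"
      by (metis norm_minus_commute norm_triangle_ineq2)
    also have "cmod (w^2) - cmod ((of_real a)^2) = (cmod w)^2 - a^2"
      by (simp add: norm_power)
    finally have nb: "cmod ((of_real a)^2 - w^2) \<ge> (Re w)^2 / 2"
      using \<open>(Re w)^2 \<le> (cmod w)^2\<close> R1 by linarith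
    have Rp: "(Re w)^2 > 0" using R1 by linarith
    then have nz: "(of_real a)^2 - w^2 \<noteq> 0" using nb by auto
    have "norm (integral {-T..T} (Ecos a w)) = 2 * a * cmod (cos (w * of_real T)) / cmod ((of_real a)^2 - w^2)"
      using V_eq[OF aT T nz] a by (simp add: norm_divide norm_mult)
    also have "\<dots> \<le> 2 * a * E / ((Re w)^2 / 2)"
    proof (intro frac_le mult_left_mono)
      have "cmod (cos (w * of_real T)) \<le> exp \<bar>Im (w * of_real T)\<bar>" by (rule norm_cos_le)
      also have "\<dots> = exp (\<bar>Im w\<bar> * T)" using T by (simp add: abs_mult)
      finally show "cmod (cos (w * of_real T)) \<le> E" using Eb by linarith
    qed (use a E0 nb Rp in auto)
    also have "\<dots> = 4 * a * E / (Re w)^2" by simp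
    also have "\<dots> \<le> 8 * a * E / (1 + (Re w)^2)"
      using Rp R1 a E0 by (simp add: field_simps)
    also have "\<dots> \<le> Kc a T \<beta> / (1 + (Re w)^2)"
      unfolding Kc_def E_def[symmetric] using p E0 T R_def
      by (intro divide_right_mono) (auto simp: field_simps intro!: mult_nonneg_nonneg)
    finally show ?thesis .
  next
    case False
    have "norm (integral {-T..T} (Ecos a w)) \<le> exp (\<bar>Im w\<bar> * T) * (2*T)" by (rule V_bound1[OF T])
    also have "\<dots> \<le> E * (2*T)" using Eb T by simp
    also have "\<dots> \<le> E * (2*T) * (1 + R) / (1 + (Re w)^2)"
      using False p E0 T by (simp add: field_simps)
    also have "\<dots> \<le> Kc a T \<beta> / (1 + (Re w)^2)"
      unfolding Kc_def E_def[symmetric] R_def[symmetric] using p E0 T a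
      by (intro divide_right_mono) (auto simp: field_simps)
    finally show ?thesis .
  qed
qed

lemma Kc_nonneg: "a > 0 \<Longrightarrow> T > 0 \<Longrightarrow> Kc a T \<beta> \<ge> 0"
  unfolding Kc_def by (intro mult_nonneg_nonneg) auto



lemma psi_summable:
  assumes g: "g > 0" and K: "K \<ge> 0"
  shows "summable (\<lambda>j::nat. K / (1 + (real j * g)^2))"
proof (rule summable_comparison_test'[where N=1])
  show "summable (\<lambda>j::nat. K / g^2 * inverse (real j ^ 2))"
    by (intro summable_mult inverse_power_summable) auto
  fix j :: nat assume "j \<ge> 1"
  then have "(real j * g)^2 > 0" using g by simp
  then show "norm (K / (1 + (real j * g)^2)) \<le> K / g^2 * inverse (real j ^ 2)"
    using K g \<open>j \<ge> 1\<close>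
    by (simp add: field_simps power_mult_distrib add_pos_nonneg frac_le)
qed

lemma half_sum:
  fixes r :: "nat \<Rightarrow> real"
  assumes fin: "finite S" and g: "g > 0" and K: "K \<ge> 0"
    and sep: "\<forall>n\<in>S. \<forall>m\<in>S. n \<noteq> m \<longrightarrow> g \<le> \<bar>r n - r m\<bar>"
  shows "(\<Sum>m\<in>{m\<in>S. x \<le> r m}. K / (1 + (x - r m)^2)) \<le> (\<Sum>j. K / (1 + (real j * g)^2))"
proof -
  define A where "A = {m\<in>S. x \<le> r m}"
  define h where "h m = nat \<lfloor>(r m - x) / g\<rfloor>" for m
  have hle: "real (h m) * g \<le> r m - x" if "m \<in> A" for m
  proof -
    have "(r m - x) / g \<ge> 0" using that g unfolding A_def by auto
    then have "real (h m) \<le> (r m - x) / g" unfolding h_def by linarith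
    then show ?thesis using g by (simp add: field_simps)
  qed
  have inj: "inj_on h A"
  proof (rule inj_onI, rule ccontr)
    fix m m' assume m: "m \<in> A" "m' \<in> A" "h m = h m'" "m \<noteq> m'"
    have nn: "(r m - x) / g \<ge> 0" "(r m' - x) / g \<ge> 0" using m g unfolding A_def by auto
    have "\<lfloor>(r m - x) / g\<rfloor> = \<lfloor>(r m' - x) / g\<rfloor>" using m(3) nn unfolding h_def
      by (metis floor_less_zero nat_eq_iff2 not_less)
    then have "\<bar>(r m - x) / g - (r m' - x) / g\<bar> < 1" by linarith
    then have "\<bar>r m - r m'\<bar> < g" using g by (simp add: field_simps diff_divide_distrib[symmetric])
    moreover have "g \<le> \<bar>r m - r m'\<bar>" using sep m unfolding A_def by auto
    ultimately show False by simp
  qed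
  have "(\<Sum>m\<in>A. K / (1 + (x - r m)^2)) \<le> (\<Sum>m\<in>A. K / (1 + (real (h m) * g)^2))"
  proof (rule sum_mono)
    fix m assume "m \<in> A"
    have "0 \<le> real (h m) * g" using g by simp
    then have "(real (h m) * g)^2 \<le> (x - r m)^2"
      using hle[OF \<open>m \<in> A\<close>] by (subst power2_commute) (rule power_mono)
    then show "K / (1 + (x - r m)^2) \<le> K / (1 + (real (h m) * g)^2)"
      using K by (intro divide_left_mono) (auto simp: add_pos_nonneg)
  qed
  also have "\<dots> = (\<Sum>j\<in>h ` A. K / (1 + (real j * g)^2))"
    using inj by (simp add: sum.reindex)
  also have "\<dots> \<le> (\<Sum>j. K / (1 + (real j * g)^2))"
    using fin psi_summable[OF g K] K unfolding A_def
    by (intro sum_le_suminf) (auto simp: add_pos_nonneg)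
  finally show ?thesis unfolding A_def .
qed

lemma sep_sum:
  fixes r :: "nat \<Rightarrow> real"
  assumes fin: "finite S" and g: "g > 0" and K: "K \<ge> 0"
    and sep: "\<forall>n\<in>S. \<forall>m\<in>S. n \<noteq> m \<longrightarrow> g \<le> \<bar>r n - r m\<bar>"
  shows "(\<Sum>m\<in>S. K / (1 + (x - r m)^2)) \<le> 2 * (\<Sum>j. K / (1 + (real j * g)^2))"
proof -
  define A where "A = {m\<in>S. x \<le> r m}"
  define B where "B = {m\<in>S. - x \<le> - r m}"
  have nn: "K / (1 + (x - r m)^2) \<ge> 0" for m using K by (simp add: add_pos_nonneg)
  have "(\<Sum>m\<in>S. K / (1 + (x - r m)^2)) = (\<Sum>m\<in>A. K / (1 + (x - r m)^2)) + (\<Sum>m\<in>S - A. K / (1 + (x - r m)^2))"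
    using fin unfolding A_def by (metis (no_types, lifting) add.commute mem_Collect_eq subsetI sum.subset_diff)
  also have "(\<Sum>m\<in>S - A. K / (1 + (x - r m)^2)) \<le> (\<Sum>m\<in>B. K / (1 + (x - r m)^2))"
    using fin nn unfolding A_def B_def by (intro sum_mono2) auto
  also have "(\<Sum>m\<in>B. K / (1 + (x - r m)^2)) = (\<Sum>m\<in>B. K / (1 + ((-x) - (- r m))^2))"
    by (simp add: power2_commute)
  also have "\<dots> \<le> (\<Sum>j. K / (1 + (real j * g)^2))"
    unfolding B_def using half_sum[OF fin g K, of "\<lambda>m. - r m" "-x"] sep by (simp add: abs_minus_commute)
  also have "(\<Sum>m\<in>A. K / (1 + (x - r m)^2)) \<le> (\<Sum>j. K / (1 + (real j * g)^2))"
    unfolding A_def by (rule half_sum[OF fin g K sep])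
  finally show ?thesis by linarith
qed

lemma schur:
  fixes u :: "nat \<Rightarrow> real" and M :: "nat \<Rightarrow> nat \<Rightarrow> real"
  assumes fin: "finite S" and sym: "\<And>n m. M n m = M m n" and M0: "\<And>n m. M n m \<ge> 0"
    and row: "\<And>n. n \<in> S \<Longrightarrow> (\<Sum>m\<in>S. M n m) \<le> C"
  shows "(\<Sum>n\<in>S. \<Sum>m\<in>S. \<bar>u n\<bar> * \<bar>u m\<bar> * M n m) \<le> C * (\<Sum>n\<in>S. (u n)^2)"
proof -
  have "(\<Sum>n\<in>S. \<Sum>m\<in>S. \<bar>u n\<bar> * \<bar>u m\<bar> * M n m) \<le> (\<Sum>n\<in>S. \<Sum>m\<in>S. ((u n)^2/2 + (u m)^2/2) * M n m)"
  proof (intro sum_mono mult_right_mono M0)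
    fix n m
    have "2 * (\<bar>u n\<bar> * \<bar>u m\<bar>) \<le> (u n)^2 + (u m)^2"
      using sum_squares_bound[of "\<bar>u n\<bar>" "\<bar>u m\<bar>"] by simp
    then show "\<bar>u n\<bar> * \<bar>u m\<bar> \<le> (u n)^2/2 + (u m)^2/2" by simp
  qed
  also have "\<dots> = (\<Sum>n\<in>S. \<Sum>m\<in>S. (u n)^2/2 * M n m) + (\<Sum>n\<in>S. \<Sum>m\<in>S. (u m)^2/2 * M n m)"
    by (simp add: distrib_right sum.distrib)
  also have "(\<Sum>n\<in>S. \<Sum>m\<in>S. (u m)^2/2 * M n m) = (\<Sum>n\<in>S. \<Sum>m\<in>S. (u n)^2/2 * M n m)"
    by (subst sum.swap) (simp add: sym)
  also have "(\<Sum>n\<in>S. \<Sum>m\<in>S. (u n)^2/2 * M n m) = (\<Sum>n\<in>S. (u n)^2/2 * (\<Sum>m\<in>S. M n m))"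
    by (simp add: sum_distrib_left)
  also have "\<dots> \<le> (\<Sum>n\<in>S. (u n)^2/2 * C)"
    by (intro sum_mono mult_left_mono row) auto
  finally show ?thesis by (simp add: sum_distrib_left sum_distrib_right mult.commute)
qed



lemma expand_sq:
  fixes \<mu> c :: "nat \<Rightarrow> complex"
  shows "cos (a*t) * (cmod (\<Sum>n\<in>S. c n * exp (\<i> * \<mu> n * of_real t)))^2
     = Re (\<Sum>n\<in>S. \<Sum>m\<in>S. (c n * cnj (c m)) * Ecos a (\<mu> n - cnj (\<mu> m)) t)"
proof -
  define e where "e n = exp (\<i> * \<mu> n * of_real t)" for n
  have pr: "(c n * e n) * cnj (c m * e m) = (c n * cnj (c m)) * exp (\<i> * (\<mu> n - cnj (\<mu> m)) * of_real t)" for n m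
  proof -
    have "e n * cnj (e m) = exp (\<i> * \<mu> n * of_real t + cnj (\<i> * \<mu> m * of_real t))"
      unfolding e_def by (simp add: exp_cnj exp_add[symmetric])
    also have "\<i> * \<mu> n * of_real t + cnj (\<i> * \<mu> m * of_real t) = \<i> * (\<mu> n - cnj (\<mu> m)) * of_real t"
      by (simp add: algebra_simps)
    finally show ?thesis by (simp add: ac_simps)
  qed
  have "(cmod (\<Sum>n\<in>S. c n * e n))^2 = Re ((\<Sum>n\<in>S. c n * e n) * cnj (\<Sum>n\<in>S. c n * e n))"
    by (metis Re_complex_of_real complex_norm_square)
  also have "(\<Sum>n\<in>S. c n * e n) * cnj (\<Sum>n\<in>S. c n * e n) = (\<Sum>n\<in>S. \<Sum>m\<in>S. (c n * e n) * cnj (c m * e m))"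
    by (simp add: sum_product cnj_sum)
  also have "\<dots> = (\<Sum>n\<in>S. \<Sum>m\<in>S. (c n * cnj (c m)) * exp (\<i> * (\<mu> n - cnj (\<mu> m)) * of_real t))"
    by (intro sum.cong refl pr)
  finally have "cos (a*t) * (cmod (\<Sum>n\<in>S. c n * e n))^2 = Re (of_real (cos (a*t)) * (\<Sum>n\<in>S. \<Sum>m\<in>S. (c n * cnj (c m)) * exp (\<i> * (\<mu> n - cnj (\<mu> m)) * of_real t)))"
    by simp
  also have "of_real (cos (a*t)) * (\<Sum>n\<in>S. \<Sum>m\<in>S. (c n * cnj (c m)) * exp (\<i> * (\<mu> n - cnj (\<mu> m)) * of_real t))
     = (\<Sum>n\<in>S. \<Sum>m\<in>S. (c n * cnj (c m)) * Ecos a (\<mu> n - cnj (\<mu> m)) t)"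
    unfolding Ecos_def by (simp add: sum_distrib_left ac_simps)
  finally show ?thesis unfolding e_def .
qed

lemma main_bound:
  fixes \<mu> c :: "nat \<Rightarrow> complex"
  assumes fin: "finite S" and a: "a > 0" and T: "T > 0" and aT: "a * T = pi/2" and g: "g > 0"
    and imb: "\<forall>n\<in>S. \<bar>Im (\<mu> n)\<bar> \<le> B"
    and sep: "\<forall>n\<in>S. \<forall>m\<in>S. n \<noteq> m \<longrightarrow> g \<le> \<bar>Re (\<mu> n) - Re (\<mu> m)\<bar>"
  shows "integral {-T..T} (\<lambda>t. cos (a*t) * (cmod (\<Sum>n\<in>S. c n * exp (\<i> * \<mu> n * of_real t)))^2)
     \<le> 2 * (\<Sum>j. Kc a T (2*B) / (1 + (real j * g)^2)) * (\<Sum>n\<in>S. (cmod (c n))^2)"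
proof -
  define W where "W n m = \<mu> n - cnj (\<mu> m)" for n m
  define X where "X n m = c n * cnj (c m)" for n m
  define V where "V n m = integral {-T..T} (Ecos a (W n m))" for n m
  define K where "K = Kc a T (2*B)"
  define M where "M n m = K / (1 + (Re (\<mu> n) - Re (\<mu> m))^2)" for n m
  have K0: "K \<ge> 0" unfolding K_def using Kc_nonneg a T by auto
  have hi: "((\<lambda>t. \<Sum>n\<in>S. \<Sum>m\<in>S. X n m * Ecos a (W n m) t) has_integral (\<Sum>n\<in>S. \<Sum>m\<in>S. X n m * V n m)) {-T..T}"
    unfolding V_def
    by (intro has_integral_sum fin has_integral_mult_right integrable_integral integrable_continuous_interval Ecos_cont)
  have "((\<lambda>t. cos (a*t) * (cmod (\<Sum>n\<in>S. c n * exp (\<i> * \<mu> n * of_real t)))^2) has_integral Re (\<Sum>n\<in>S. \<Sum>m\<in>S. X n m * V n m)) {-T..T}"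
    using has_integral_Re[OF hi] unfolding expand_sq X_def W_def by simp
  then have "integral {-T..T} (\<lambda>t. cos (a*t) * (cmod (\<Sum>n\<in>S. c n * exp (\<i> * \<mu> n * of_real t)))^2) = Re (\<Sum>n\<in>S. \<Sum>m\<in>S. X n m * V n m)"
    by (rule integral_unique)
  also have "\<dots> \<le> cmod (\<Sum>n\<in>S. \<Sum>m\<in>S. X n m * V n m)" by (rule complex_Re_le_cmod)
  also have "\<dots> \<le> (\<Sum>n\<in>S. \<Sum>m\<in>S. \<bar>cmod (c n)\<bar> * \<bar>cmod (c m)\<bar> * M n m)"
  proof -
    have "cmod (\<Sum>n\<in>S. \<Sum>m\<in>S. X n m * V n m) \<le> (\<Sum>n\<in>S. cmod (\<Sum>m\<in>S. X n m * V n m))"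
      by (rule norm_sum)
    also have "\<dots> \<le> (\<Sum>n\<in>S. \<Sum>m\<in>S. cmod (X n m * V n m))"
      by (intro sum_mono norm_sum)
    also have "\<dots> \<le> (\<Sum>n\<in>S. \<Sum>m\<in>S. \<bar>cmod (c n)\<bar> * \<bar>cmod (c m)\<bar> * M n m)"
    proof (intro sum_mono)
      fix n m assume nm: "n \<in> S" "m \<in> S"
      have "\<bar>Im (\<mu> n)\<bar> \<le> B" "\<bar>Im (\<mu> m)\<bar> \<le> B" using imb nm by auto
      then have "\<bar>Im (W n m)\<bar> \<le> 2*B" unfolding W_def by simp
      then have "cmod (V n m) \<le> K / (1 + (Re (W n m))^2)"
        unfolding V_def K_def by (rule V_bound[OF a T aT])
      also have "Re (W n m) = Re (\<mu> n) - Re (\<mu> m)" unfolding W_def by simp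
      finally have "cmod (V n m) \<le> M n m" unfolding M_def .
      then show "cmod (X n m * V n m) \<le> \<bar>cmod (c n)\<bar> * \<bar>cmod (c m)\<bar> * M n m"
        unfolding X_def by (simp add: norm_mult mult_left_mono)
    qed
    finally show ?thesis .
  qed
  also have "\<dots> \<le> (2 * (\<Sum>j. K / (1 + (real j * g)^2))) * (\<Sum>n\<in>S. (cmod (c n))^2)"
  proof (rule schur[OF fin])
    show "M n m = M m n" for n m unfolding M_def by (simp add: power2_commute)
    show "M n m \<ge> 0" for n m unfolding M_def using K0 by (simp add: add_pos_nonneg)
    show "(\<Sum>m\<in>S. M n m) \<le> 2 * (\<Sum>j. K / (1 + (real j * g)^2))" if "n \<in> S" for n
      unfolding M_def by (rule sep_sum[OF fin g K0 sep])
  qed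
  finally show ?thesis unfolding K_def .
qed



theorem proposition5p12:
  fixes \<sigma> :: "nat \<Rightarrow> complex" and \<gamma> :: real
  assumes gap: "liminf (\<lambda>n. ereal (Re (\<sigma> (Suc n)) - Re (\<sigma> n))) = ereal \<gamma>"
    and gpos: "\<gamma> > 0"
    and bdd: "bounded (range (\<lambda>n. Im (\<sigma> n)))"
  shows "\<forall>\<epsilon>. 0 < \<epsilon> \<and> \<epsilon> < 1 \<longrightarrow>
    (\<exists>n0::nat. n0 \<ge> 1 \<and>
      (\<forall>T. T > pi / (\<gamma> * sqrt (1 - \<epsilon>)) \<longrightarrow>
        (\<exists>c>0. \<forall>F :: nat \<Rightarrow> complex. summable (\<lambda>n. (cmod (F n))\<^sup>2) \<longrightarrow>
           (\<forall>N. (LINT t|lborel. kstar T t *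
                 (cmod (\<Sum>n=n0..N. F n * exp (\<i> * \<sigma> n * complex_of_real t)
                        + cnj (F n) * exp (- \<i> * cnj (\<sigma> n) * complex_of_real t)))\<^sup>2)
               \<le> c * (\<Sum>n. (cmod (F (n + n0)))\<^sup>2)))))"
proof (intro allI impI)
  fix \<epsilon> :: real assume eps: "0 < \<epsilon> \<and> \<epsilon> < 1"
  obtain B where B: "\<And>n. \<bar>Im (\<sigma> n)\<bar> \<le> B"
    using bdd unfolding bounded_iff by auto
  define g where "g = \<gamma> / 2"
  have g: "g > 0" unfolding g_def using gpos by simp
  have "ereal g < liminf (\<lambda>n. ereal (Re (\<sigma> (Suc n)) - Re (\<sigma> n)))"
    unfolding gap g_def using gpos by simp
  then have "eventually (\<lambda>n. ereal g < ereal (Re (\<sigma> (Suc n)) - Re (\<sigma> n))) sequentially"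
    by (rule less_LiminfD)
  then obtain n1 where n1: "\<And>n. n \<ge> n1 \<Longrightarrow> g < Re (\<sigma> (Suc n)) - Re (\<sigma> n)"
    unfolding eventually_sequentially by auto
  define n0 where "n0 = max 1 n1"
  have grow: "Re (\<sigma> m) + real k * g \<le> Re (\<sigma> (m + k))" if "n0 \<le> m" for m k
  proof (induction k)
    case 0 then show ?case by simp
  next
    case (Suc k)
    have "g < Re (\<sigma> (Suc (m + k))) - Re (\<sigma> (m + k))" using n1[of "m+k"] that unfolding n0_def by simp
    then show ?case using Suc by (simp add: algebra_simps)
  qed
  have sep: "\<forall>n\<in>{n0..N}. \<forall>m\<in>{n0..N}. n \<noteq> m \<longrightarrow> g \<le> \<bar>Re (\<sigma> n) - Re (\<sigma> m)\<bar>" for N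
  proof (intro ballI impI)
    fix n m assume nm: "n \<in> {n0..N}" "m \<in> {n0..N}" "n \<noteq> m"
    have key: "g \<le> Re (\<sigma> q) - Re (\<sigma> p)" if "n0 \<le> p" "p < q" for p q
    proof -
      define k where "k = q - p"
      have k: "q = p + k" "k \<ge> 1" using \<open>p < q\<close> unfolding k_def by auto
      have "Re (\<sigma> p) + real k * g \<le> Re (\<sigma> q)" using grow[OF \<open>n0 \<le> p\<close>, of k] k by simp
      moreover have "g \<le> real k * g" using k g by simp
      ultimately show ?thesis by simp
    qed
    show "g \<le> \<bar>Re (\<sigma> n) - Re (\<sigma> m)\<bar>"
    proof (cases "n < m")
      case True then show ?thesis using key[of n m] nm by auto
    next
      case False then have "m < n" using nm by simp
      then show ?thesis using key[of m n] nm by auto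
    qed
  qed
  show "\<exists>n0::nat. n0 \<ge> 1 \<and>
      (\<forall>T. T > pi / (\<gamma> * sqrt (1 - \<epsilon>)) \<longrightarrow>
        (\<exists>c>0. \<forall>F :: nat \<Rightarrow> complex. summable (\<lambda>n. (cmod (F n))\<^sup>2) \<longrightarrow>
           (\<forall>N. (LINT t|lborel. kstar T t *
                 (cmod (\<Sum>n=n0..N. F n * exp (\<i> * \<sigma> n * complex_of_real t)
                        + cnj (F n) * exp (- \<i> * cnj (\<sigma> n) * complex_of_real t)))\<^sup>2)
               \<le> c * (\<Sum>n. (cmod (F (n + n0)))\<^sup>2))))"
  proof (rule exI[where x=n0], intro conjI allI impI)
    show "n0 \<ge> 1" unfolding n0_def by simp
    fix T assume Tgt: "T > pi / (\<gamma> * sqrt (1 - \<epsilon>))"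
    have "pi / (\<gamma> * sqrt (1 - \<epsilon>)) > 0" using eps gpos by simp
    then have T: "T > 0" using Tgt by linarith
    define a where "a = pi / (2*T)"
    have a: "a > 0" unfolding a_def using T by simp
    have aT: "a * T = pi/2" unfolding a_def using T by simp
    define C where "C = 2 * (\<Sum>j. Kc a T (2*B) / (1 + (real j * g)^2))"
    have C0: "C \<ge> 0" unfolding C_def
      using psi_summable[OF g Kc_nonneg[OF a T]] Kc_nonneg[OF a T]
      by (intro mult_nonneg_nonneg suminf_nonneg) (auto simp: add_pos_nonneg)
    show "\<exists>c>0. \<forall>F :: nat \<Rightarrow> complex. summable (\<lambda>n. (cmod (F n))\<^sup>2) \<longrightarrow>
           (\<forall>N. (LINT t|lborel. kstar T t *
                 (cmod (\<Sum>n=n0..N. F n * exp (\<i> * \<sigma> n * complex_of_real t)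
                        + cnj (F n) * exp (- \<i> * cnj (\<sigma> n) * complex_of_real t)))\<^sup>2)
               \<le> c * (\<Sum>n. (cmod (F (n + n0)))\<^sup>2))"
    proof (rule exI[where x="4 * C + 1"], intro conjI allI impI)
      show "4 * C + 1 > 0" using C0 by simp
      fix F :: "nat \<Rightarrow> complex" and N :: nat
      assume sF: "summable (\<lambda>n. (cmod (F n))\<^sup>2)"
      define S where "S = {n0..N}"
      define f1 where "f1 t = (\<Sum>n\<in>S. F n * exp (\<i> * \<sigma> n * complex_of_real t))" for t
      define f2 where "f2 t = (\<Sum>n\<in>S. cnj (F n) * exp (\<i> * (- cnj (\<sigma> n)) * complex_of_real t))" for t
      define h where "h t = cos (a*t) * (cmod (f1 t + f2 t))^2" for t
      have fsum: "(\<Sum>n=n0..N. F n * exp (\<i> * \<sigma> n * complex_of_real t)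
                        + cnj (F n) * exp (- \<i> * cnj (\<sigma> n) * complex_of_real t)) = f1 t + f2 t" for t
        unfolding f1_def f2_def S_def by (simp add: sum.distrib)
      have integrand: "kstar T t * (cmod (\<Sum>n=n0..N. F n * exp (\<i> * \<sigma> n * complex_of_real t)
                        + cnj (F n) * exp (- \<i> * cnj (\<sigma> n) * complex_of_real t)))\<^sup>2
           = (if t \<in> {-T..T} then h t else 0)" for t
        unfolding fsum h_def kstar_def a_def by (auto simp: abs_le_iff mult.commute)
      have h_cont: "continuous_on {-T..T} h" unfolding h_def f1_def f2_def
        by (intro continuous_intros)
      define J where "J = integral {-T..T} h"
      have hJ: "(h has_integral J) {-T..T}" unfolding J_def
        by (intro integrable_integral integrable_continuous_interval h_cont)
      have LJ: "(LINT t|lborel. kstar T t * (cmod (\<Sum>n=n0..N. F n * exp (\<i> * \<sigma> n * complex_of_real t)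
                        + cnj (F n) * exp (- \<i> * cnj (\<sigma> n) * complex_of_real t)))\<^sup>2) \<le> max J 0"
      proof (cases "integrable lborel (\<lambda>t. if t \<in> {-T..T} then h t else 0)")
        case True
        have "((\<lambda>t. if t \<in> {-T..T} then h t else 0) has_integral J) UNIV"
          using hJ by (simp only: has_integral_restrict_UNIV)
        then have "integral UNIV (\<lambda>t. if t \<in> {-T..T} then h t else 0) = J" by (rule integral_unique)
        then show ?thesis unfolding integrand using integral_lborel[OF True] by simp
      next
        case False
        then show ?thesis unfolding integrand by (simp add: not_integrable_integral_eq)
      qed
      have cos0: "cos (a*t) \<ge> 0" if "t \<in> {-T..T}" for t
      proof (rule cos_ge_zero)
        have "\<bar>a*t\<bar> \<le> a * T" using that a by (auto simp: abs_mult abs_le_iff mult_left_mono)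
        then show "- (pi/2) \<le> a*t" "a*t \<le> pi/2" using aT by (auto simp: abs_le_iff)
      qed
      define h1 where "h1 t = cos (a*t) * (cmod (f1 t))^2" for t
      define h2 where "h2 t = cos (a*t) * (cmod (f2 t))^2" for t
      have i1: "h1 integrable_on {-T..T}" unfolding h1_def f1_def
        by (intro integrable_continuous_interval continuous_intros)
      have i2: "h2 integrable_on {-T..T}" unfolding h2_def f2_def
        by (intro integrable_continuous_interval continuous_intros)
      have "J \<le> integral {-T..T} (\<lambda>t. 2 * h1 t + 2 * h2 t)"
        unfolding J_def
      proof (rule integral_le)
        show "h integrable_on {-T..T}" using hJ by blast
        show "(\<lambda>t. 2 * h1 t + 2 * h2 t) integrable_on {-T..T}" using i1 i2 by (intro integrable_add integrable_cmul) auto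
        fix t assume t: "t \<in> {-T..T}"
        have "(cmod (f1 t + f2 t))^2 \<le> (cmod (f1 t) + cmod (f2 t))^2"
          by (intro power_mono norm_triangle_ineq) auto
        also have "\<dots> \<le> 2 * (cmod (f1 t))^2 + 2 * (cmod (f2 t))^2"
          using sum_squares_bound[of "cmod (f1 t)" "cmod (f2 t)"] by (simp add: power2_sum)
        finally have "cos (a*t) * (cmod (f1 t + f2 t))^2 \<le> cos (a*t) * (2 * (cmod (f1 t))^2 + 2 * (cmod (f2 t))^2)"
          using cos0[OF t] by (rule mult_left_mono)
        then show "h t \<le> 2 * h1 t + 2 * h2 t"
          unfolding h_def h1_def h2_def by (simp add: algebra_simps)
      qed
      also have "\<dots> = 2 * integral {-T..T} h1 + 2 * integral {-T..T} h2"
        using i1 i2 by (simp add: integral_add integrable_cmul)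
      also have "integral {-T..T} h1 \<le> C * (\<Sum>n\<in>S. (cmod (F n))^2)"
        unfolding h1_def f1_def C_def
        by (rule main_bound[OF _ a T aT g]) (use B sep in \<open>auto simp: S_def\<close>)
      also have "integral {-T..T} h2 \<le> C * (\<Sum>n\<in>S. (cmod (F n))^2)"
        unfolding h2_def f2_def C_def
        using main_bound[OF _ a T aT g, of S "\<lambda>n. - cnj (\<sigma> n)" B "\<lambda>n. cnj (F n)"] B sep[of N]
        by (auto simp: S_def abs_minus_commute)
      finally have J4: "J \<le> 4 * C * (\<Sum>n\<in>S. (cmod (F n))^2)" by simp
      have s0: "summable (\<lambda>n. (cmod (F (n + n0)))^2)"
        using sF summable_iff_shift[of "\<lambda>n. (cmod (F n))^2" n0] by simp
      have Q0: "(\<Sum>n. (cmod (F (n + n0)))^2) \<ge> 0" by (intro suminf_nonneg s0) auto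
      have SQ: "(\<Sum>n\<in>S. (cmod (F n))^2) \<le> (\<Sum>n. (cmod (F (n + n0)))^2)"
      proof (cases "n0 \<le> N")
        case True
        have "S = {0 + n0..(N - n0) + n0}" unfolding S_def using True by simp
        then have "(\<Sum>n\<in>S. (cmod (F n))^2) = (\<Sum>i\<in>{0..N-n0}. (cmod (F (i + n0)))^2)"
          by (simp only: sum.shift_bounds_cl_nat_ivl)
        also have "\<dots> \<le> (\<Sum>n. (cmod (F (n + n0)))^2)"
          by (intro sum_le_suminf s0) auto
        finally show ?thesis .
      next
        case False then have "S = {}" unfolding S_def by simp
        then show ?thesis using Q0 by simp
      qed
      have "max J 0 \<le> 4 * C * (\<Sum>n. (cmod (F (n + n0)))^2)"
      proof -
        have "4 * C * (\<Sum>n\<in>S. (cmod (F n))^2) \<le> 4 * C * (\<Sum>n. (cmod (F (n + n0)))^2)"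
          using SQ C0 by (intro mult_left_mono) auto
        moreover have "0 \<le> 4 * C * (\<Sum>n. (cmod (F (n + n0)))^2)" using C0 Q0 by simp
        ultimately show ?thesis using J4 by linarith
      qed
      also have "\<dots> \<le> (4 * C + 1) * (\<Sum>n. (cmod (F (n + n0)))^2)"
        using Q0 by (simp add: algebra_simps)
      finally show "(LINT t|lborel. kstar T t * (cmod (\<Sum>n=n0..N. F n * exp (\<i> * \<sigma> n * complex_of_real t)
                        + cnj (F n) * exp (- \<i> * cnj (\<sigma> n) * complex_of_real t)))\<^sup>2)
               \<le> (4 * C + 1) * (\<Sum>n. (cmod (F (n + n0)))\<^sup>2)" using LJ by linarith
    qed
  qed
qed

end
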